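(* Let $\mathbf A\in\mathbb R^{d_1\times N_1}$ be a random matrix whose columns $\mathbf a_1,\dots,\mathbf a_{N_1}$ are uniformly distributed on $\mathbb S^{d_1-1}$, let $\mathbf y\in\mathbb R^{d_2}$ be uniformly distributed on $\mathbb S^{d_2-1}$, independent of $\mathbf A$, and let $\boldsymbol\Sigma\in\mathbb R^{d_1\times d_2}$ be a deterministic matrix. Then for every $t>0$, with probability at least $1-2e^{-t}$, \[ \mathbf a_i^\top\boldsymbol\Sigma\mathbf y\ \le\ \frac{2\sqrt{t\log N_1+t^2}\,\|\boldsymbol\Sigma\|_F}{\sqrt{d_1}}\quad\text{for all } i=1,\dots,N_1. \]
   Context: $\mathbb S^{m-1}$ denotes the unit sphere of $\mathbb R^m$; $\|\cdot\|_F$ is the Frobenius norm. *)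

theory Defs
  imports "HOL-Probability.Probability"
begin

text \<open>Uniform distribution on the unit sphere of a Euclidean space: the image of the
  uniform distribution on the open unit ball under radial projection x \<mapsto> x / |x|
  (equivalently, the normalized surface measure on the sphere).\<close>
definition uniform_sphere :: "('a::euclidean_space) measure" where
  "uniform_sphere = distr (uniform_measure lborel (ball 0 1)) borel (\<lambda>x. x /\<^sub>R norm x)"

definition frob_norm :: "real^'m^'n \<Rightarrow> real" where
  "frob_norm M = sqrt (\<Sum>i\<in>UNIV. \<Sum>j\<in>UNIV. (M $ i $ j)^2)"

end

theory Submission
  imports Defs
begin

lemma exp_bound_case2:
  fixes w :: real assumes "1/2 \<le> w" "w \<le> 1"
  shows "1/(4*w) \<le> exp (-(3/4)*w)"
proof -
  have e: "1 - 3/4*w \<le> exp (-(3/4)*w)" using exp_ge_add_one_self[of "-(3/4)*w"] by simp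
  have "1/(4*w) \<le> 1 - 3/4*w"
  proof -
    have "0 \<le> (3*w-1)*(1-w)" using assms by (intro mult_nonneg_nonneg) auto
    then have "1 \<le> 4*w*(1 - 3/4*w)" by (simp add: algebra_simps)
    then show ?thesis using assms by (simp add: field_simps)
  qed
  with e show ?thesis by linarith
qed

lemma dist_sq:
  fixes u x :: "'a::real_inner" assumes "norm u = 1"
  shows "(dist (c *\<^sub>R u) x)^2 = (norm x)^2 - 2*c*(x \<bullet> u) + c^2"
proof -
  have uu: "u \<bullet> u = 1" using assms by (simp add: dot_square_norm)
  have "(dist (c *\<^sub>R u) x)^2 = (c *\<^sub>R u - x) \<bullet> (c *\<^sub>R u - x)"
    by (simp add: dist_norm power2_norm_eq_inner)
  also have "\<dots> = c*c*(u \<bullet> u) - 2*c*(x \<bullet> u) + x \<bullet> x"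
    by (simp add: inner_diff_left inner_diff_right inner_commute algebra_simps)
  finally show ?thesis using uu by (simp add: power2_norm_eq_inner[symmetric] power2_eq_square)
qed

lemma cap_cover:
  fixes u :: "'a::euclidean_space" and z :: real
  assumes u: "norm u = 1" and z: "0 \<le> z" "z < 1"
  shows "\<exists>c rr. 0 \<le> rr \<and> rr \<le> exp (-(3/8)*(z^2)) \<and>
     (\<forall>x. norm x \<le> 1 \<longrightarrow> x \<bullet> u > z * norm x \<longrightarrow> x \<in> cball c rr)"
proof (cases "z^2 \<le> 1/2")
  case True
  define rr where "rr = sqrt (1 - z^2)"
  have r0: "0 \<le> rr" using z True unfolding rr_def by simp
  have "rr^2 = 1 - z^2" unfolding rr_def using True by simp
  also have "\<dots> \<le> exp (-(z^2))" using exp_ge_add_one_self[of "-(z^2)"] by simp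
  also have "\<dots> \<le> exp (-(3/4)*(z^2))" by simp
  also have "\<dots> = (exp (-(3/8)*(z^2)))^2" by (simp add: power2_eq_square flip: exp_add)
  finally have rle: "rr \<le> exp (-(3/8)*(z^2))" 
    by (meson exp_ge_zero power2_le_imp_le)
  have "\<forall>x. norm x \<le> 1 \<longrightarrow> x \<bullet> u > z * norm x \<longrightarrow> x \<in> cball (z *\<^sub>R u) rr"
  proof (intro allI impI)
    fix x :: 'a assume x1: "norm x \<le> 1" and xu: "x \<bullet> u > z * norm x"
    have "(dist (z *\<^sub>R u) x)^2 = (norm x)^2 - 2*z*(x \<bullet> u) + z^2"
      using dist_sq[OF u, of z x] by simp
    also have "\<dots> \<le> (norm x)^2 - 2*z^2 * norm x + z^2"
      using mult_left_mono[OF less_imp_le[OF xu] z(1)] by (simp add: power2_eq_square algebra_simps)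
    also have "\<dots> \<le> 1 - z^2"
    proof -
      have "(norm x - 1) * (norm x + 1 - 2*z^2) \<le> 0"
        using x1 True norm_ge_zero[of x] by (intro mult_nonpos_nonneg) linarith+
      then show ?thesis by (simp add: algebra_simps power2_eq_square)
    qed
    finally have "(dist (z *\<^sub>R u) x)^2 \<le> rr^2" using \<open>rr^2 = 1 - z^2\<close> by simp
    then show "x \<in> cball (z *\<^sub>R u) rr" using power2_le_imp_le[OF _ r0] by (simp add: mem_cball)
  qed
  then show ?thesis using r0 rle by blast
next
  case False
  hence sp: "z > 0" using z by (cases "z = 0") auto
  define rr where "rr = 1/(2*z)"
  have r0: "0 \<le> rr" using sp unfolding rr_def by simp
  have "rr^2 = 1/(4*(z^2))" unfolding rr_def by (simp add: power2_eq_square)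
  also have "\<dots> \<le> exp (-(3/4)*(z^2))" using exp_bound_case2[of "z^2"] False z
    by (simp add: power_le_one)
  also have "\<dots> = (exp (-(3/8)*(z^2)))^2" by (simp add: power2_eq_square flip: exp_add)
  finally have rle: "rr \<le> exp (-(3/8)*(z^2))" 
    by (meson exp_ge_zero power2_le_imp_le)
  have "\<forall>x. norm x \<le> 1 \<longrightarrow> x \<bullet> u > z * norm x \<longrightarrow> x \<in> cball ((1/(2*z)) *\<^sub>R u) rr"
  proof (intro allI impI)
    fix x :: 'a assume x1: "norm x \<le> 1" and xu: "x \<bullet> u > z * norm x"
    have "(dist ((1/(2*z)) *\<^sub>R u) x)^2 = (norm x)^2 - (x \<bullet> u)/z + 1/(4*(z^2))"
      using dist_sq[OF u, of "1/(2*z)" x] sp by (simp add: power2_eq_square)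
    also have "\<dots> \<le> (norm x)^2 - norm x + 1/(4*(z^2))"
      using xu sp pos_le_divide_eq[OF sp, of "norm x" "x \<bullet> u"] by (simp add: mult.commute)
    also have "\<dots> \<le> 1/(4*(z^2))"
    proof -
      have "norm x * (norm x - 1) \<le> 0"
        using x1 norm_ge_zero[of x] by (intro mult_nonneg_nonpos) auto
      then show ?thesis by (simp add: algebra_simps power2_eq_square)
    qed
    finally have "(dist ((1/(2*z)) *\<^sub>R u) x)^2 \<le> rr^2" using \<open>rr^2 = 1/(4*(z^2))\<close> by simp
    then show "x \<in> cball ((1/(2*z)) *\<^sub>R u) rr" using power2_le_imp_le[OF _ r0] by (simp add: mem_cball)
  qed
  then show ?thesis using r0 rle by blast
qed

lemma normalize_meas: "(\<lambda>x::'a::euclidean_space. x /\<^sub>R norm x) \<in> borel_measurable borel"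
  by measurable

lemma cap_prob:
  fixes v :: "real^'d" and B :: real
  assumes B: "0 \<le> B" and v: "0 < norm v"
  shows "emeasure (uniform_sphere :: (real^'d) measure) {a. B < a \<bullet> v}
           \<le> ennreal (exp (-(3/8) * real CARD('d) * (B / norm v)^2))"
proof -
  define z where "z = B / norm v"
  define u where "u = v /\<^sub>R norm v"
  define P where "P = (\<lambda>x::real^'d. x /\<^sub>R norm x) -` {a. B < a \<bullet> v}"
  define U where "U = unit_ball_vol (real CARD('d))"
  have z0: "0 \<le> z" using B v unfolding z_def by simp
  have un: "norm u = 1" using v unfolding u_def by simp
  have U0: "0 < U" unfolding U_def by simp
  have Aset: "{a::real^'d. B < a \<bullet> v} \<in> sets borel" by measurable
  have Pset: "P \<in> sets lborel" unfolding P_def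
    using measurable_sets[OF normalize_meas Aset] by simp
  have ballset: "ball (0::real^'d) 1 \<in> sets lborel" by simp
  have key: "\<And>x. x \<in> ball 0 1 \<inter> P \<Longrightarrow> norm x \<le> 1 \<and> x \<bullet> u > z * norm x"
  proof -
    fix x :: "real^'d" assume x: "x \<in> ball 0 1 \<inter> P"
    then have h: "B < (x /\<^sub>R norm x) \<bullet> v" and n1: "norm x < 1" unfolding P_def by auto
    have xn: "x \<noteq> 0" using h B by auto
    then have np: "0 < norm x" by simp
    have "B * norm x < x \<bullet> v" using h np by (simp add: field_simps)
    then have "B * norm x / norm v < (x \<bullet> v) / norm v" using v by (simp add: divide_strict_right_mono)
    then show "norm x \<le> 1 \<and> x \<bullet> u > z * norm x" using n1 unfolding u_def z_def
      by (simp add: field_simps)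
  qed
  have em_ball: "emeasure lborel (ball (0::real^'d) 1) = ennreal U"
    unfolding U_def by (simp add: emeasure_ball)
  have eq: "emeasure (uniform_sphere :: (real^'d) measure) {a. B < a \<bullet> v}
      = emeasure lborel (ball 0 1 \<inter> P) / ennreal U"
    unfolding uniform_sphere_def
    by (subst emeasure_distr[OF _ Aset]) (auto simp: normalize_meas P_def em_ball ballset Pset[unfolded P_def])
  show ?thesis
  proof (cases "z < 1")
    case False
    have "ball 0 1 \<inter> P = {}"
    proof (rule ccontr)
      assume "ball 0 1 \<inter> P \<noteq> {}"
      then obtain x where x: "x \<in> ball 0 1 \<inter> P" by blast
      from key[OF x] have "x \<bullet> u > z * norm x" by simp
      moreover have "x \<bullet> u \<le> norm x * norm u" by (rule norm_cauchy_schwarz)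
      moreover have "norm x \<le> z * norm x" using False norm_ge_zero[of x] by (simp add: mult_right_mono[of 1 z, simplified])
      ultimately show False using un by simp
    qed
    then show ?thesis using eq by simp
  next
    case True
    obtain c rr where rr0: "0 \<le> rr" and rrle: "rr \<le> exp (-(3/8)*(z^2))"
      and cov: "\<forall>x. norm x \<le> 1 \<longrightarrow> x \<bullet> u > z * norm x \<longrightarrow> x \<in> cball c rr"
      using cap_cover[OF un z0 True] by blast
    have sub: "ball 0 1 \<inter> P \<subseteq> cball c rr" using key cov by blast
    have "emeasure lborel (ball 0 1 \<inter> P) \<le> emeasure lborel (cball c rr)"
      by (rule emeasure_mono[OF sub]) simp
    also have "\<dots> = ennreal (U * rr ^ CARD('d))" unfolding U_def using rr0 by (simp add: emeasure_cball)
    finally have "emeasure lborel (ball 0 1 \<inter> P) / ennreal U \<le> ennreal (U * rr ^ CARD('d)) / ennreal U"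
      by (rule divide_right_mono_ennreal)
    also have "\<dots> = ennreal (rr ^ CARD('d))" using U0 rr0 by (simp add: divide_ennreal)
    also have "\<dots> \<le> ennreal (exp (-(3/8)*(z^2)) ^ CARD('d))"
      using rr0 rrle by (intro ennreal_leI power_mono) auto
    also have "exp (-(3/8)*(z^2)) ^ CARD('d) = exp (-(3/8) * real CARD('d) * (B / norm v)^2)"
      unfolding z_def exp_of_nat_mult[symmetric] by (simp add: algebra_simps)
    finally show ?thesis using eq by simp
  qed
qed

lemma frob_bound:
  fixes S :: "real^'m^'n" and y :: "real^'m"
  shows "norm (S *v y) \<le> frob_norm S * norm y"
proof -
  have row: "(S *v y) $ i = (S $ i) \<bullet> y" for i
    by (simp add: matrix_vector_mult_def inner_vec_def)
  have nr: "(norm (S $ i))^2 = (\<Sum>j\<in>UNIV. (S $ i $ j)^2)" for i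
    unfolding power2_norm_eq_inner by (simp add: inner_vec_def power2_eq_square)
  have "(norm (S *v y))^2 = (\<Sum>i\<in>UNIV. ((S $ i) \<bullet> y)^2)"
    unfolding power2_norm_eq_inner by (simp add: inner_vec_def power2_eq_square row)
  also have "\<dots> \<le> (\<Sum>i\<in>UNIV. (norm (S $ i))^2 * (norm y)^2)"
  proof (rule sum_mono)
    fix i
    have "\<bar>(S $ i) \<bullet> y\<bar> \<le> norm (S $ i) * norm y" by (rule Cauchy_Schwarz_ineq2)
    then have "\<bar>(S $ i) \<bullet> y\<bar>^2 \<le> (norm (S $ i) * norm y)^2"
      by (intro power_mono) auto
    then show "((S $ i) \<bullet> y)^2 \<le> (norm (S $ i))^2 * (norm y)^2" by (simp add: power_mult_distrib)
  qed
  also have "\<dots> = (frob_norm S)^2 * (norm y)^2"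
    unfolding frob_norm_def using nr by (simp add: sum_distrib_right sum_nonneg)
  also have "\<dots> = (frob_norm S * norm y)^2" by (simp add: power_mult_distrib)
  finally show ?thesis
    by (rule power2_le_imp_le) (simp add: frob_norm_def sum_nonneg)
qed

lemma sets_uniform_sphere[measurable_cong, simp]: "sets (uniform_sphere :: ('a::euclidean_space) measure) = sets borel"
  by (simp add: uniform_sphere_def)

lemma space_uniform_sphere[simp]: "space (uniform_sphere :: ('a::euclidean_space) measure) = UNIV"
  by (simp add: uniform_sphere_def)

lemma prob_space_uniform_sphere: "prob_space (uniform_sphere :: ('a::euclidean_space) measure)"
proof -
  have "prob_space (uniform_measure lborel (ball (0::'a) 1))"
  proof (rule prob_space_uniform_measure)
    have p: "unit_ball_vol (real DIM('a)) > 0" by simp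
    show "emeasure lborel (ball (0::'a) 1) \<noteq> 0" by (simp add: emeasure_ball) (metis p less_irrefl)
    show "emeasure lborel (ball (0::'a) 1) \<noteq> \<infinity>" by (simp add: emeasure_ball)
  qed
  then show ?thesis unfolding uniform_sphere_def
    by (rule prob_space.prob_space_distr) measurable
qed

lemma AE_sphere_norm: "AE y in (uniform_sphere :: ('a::euclidean_space) measure). norm y \<le> 1"
proof -
  have n: "norm (x /\<^sub>R norm x) \<le> 1" for x :: 'a by (cases "x = 0") auto
  show ?thesis unfolding uniform_sphere_def
    by (subst AE_distr_iff) (auto intro!: AE_I2 simp: normalize_meas n simp del: norm_scaleR)
qed

lemma tail_one:
  fixes S :: "real^'m^'d" and y :: "real^'m" and K :: real
  assumes y: "norm y \<le> 1" and K: "0 \<le> K"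
  shows "emeasure (uniform_sphere :: (real^'d) measure)
     {a. 2 * sqrt K * frob_norm S / sqrt (real CARD('d)) < a \<bullet> (S *v y)}
     \<le> ennreal (exp (-(3/2) * K))"
proof -
  define B where "B = 2 * sqrt K * frob_norm S / sqrt (real CARD('d))"
  define v where "v = S *v y"
  define F where "F = frob_norm S"
  have F0: "0 \<le> F" unfolding F_def frob_norm_def by (simp add: sum_nonneg)
  have B0: "0 \<le> B" unfolding B_def F_def[symmetric] using K F0 by simp
  have vF: "norm v \<le> F" unfolding v_def F_def
    using frob_bound[of S y] y F0 by (metis F_def mult_left_le order_trans)
  show ?thesis
  proof (cases "v = 0")
    case True
    then have "{a::real^'d. B < a \<bullet> v} = {}" using B0 by auto
    then show ?thesis unfolding B_def v_def by simp
  next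
    case False
    then have vp: "0 < norm v" by simp
    have "emeasure (uniform_sphere :: (real^'d) measure) {a. B < a \<bullet> v}
       \<le> ennreal (exp (-(3/8) * real CARD('d) * (B / norm v)^2))"
      by (rule cap_prob[OF B0 vp])
    also have "\<dots> \<le> ennreal (exp (-(3/2) * K))"
    proof (intro ennreal_leI exp_mono)
      have dpos: "0 < real CARD('d)" by simp
      have "real CARD('d) * (B / norm v)^2 = 4 * K * F^2 / (norm v)^2"
        unfolding B_def F_def[symmetric] using K dpos
        by (simp add: power_divide power_mult_distrib real_sqrt_pow2 field_simps)
      also have "\<dots> \<ge> 4 * K"
      proof -
        have "(norm v)^2 \<le> F^2" using vF by (intro power_mono) auto
        then have "4 * K * (norm v)^2 \<le> 4 * K * F^2" using K by (intro mult_left_mono) auto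
        then show ?thesis using vp by (simp add: pos_le_divide_eq)
      qed
      finally have "4 * K \<le> real CARD('d) * (B / norm v)^2" .
      then show "-(3/8) * real CARD('d) * (B / norm v)^2 \<le> -(3/2) * K" by linarith
    qed
    finally show ?thesis unfolding B_def v_def .
  qed
qed

lemma mv_meas[measurable]: "(\<lambda>y. (A::real^'m^'k) *v y) \<in> borel_measurable borel"
  by (intro borel_measurable_continuous_onI linear_continuous_on matrix_vector_mul_bounded_linear)

theorem lemma1:
  fixes \<Sigma> :: "real^'d2^'d1" and t :: real
  assumes "t > 0"
  defines "M \<equiv> (PiM (UNIV :: 'n::finite set) (\<lambda>_. (uniform_sphere :: (real^'d1) measure)))
                  \<Otimes>\<^sub>M (uniform_sphere :: (real^'d2) measure)"
  shows "measure M {\<omega> \<in> space M. \<forall>i. fst \<omega> i \<bullet> (\<Sigma> *v snd \<omega>)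
            \<le> 2 * sqrt (t * ln (real CARD('n)) + t^2) * frob_norm \<Sigma> / sqrt (real CARD('d1))}
         \<ge> 1 - 2 * exp (- t)"
proof -
  define S1 where "S1 = (uniform_sphere :: (real^'d1) measure)"
  define S2 where "S2 = (uniform_sphere :: (real^'d2) measure)"
  define PM where "PM = PiM (UNIV :: 'n set) (\<lambda>_. S1)"
  have MM: "M = PM \<Otimes>\<^sub>M S2" unfolding M_def PM_def S1_def S2_def ..
  define N where "N = real CARD('n)"
  define K where "K = t * ln N + t^2"
  define B where "B = 2 * sqrt K * frob_norm \<Sigma> / sqrt (real CARD('d1))"
  define q where "q = exp (-(3/2) * K)"
  have N1: "1 \<le> N" unfolding N_def by simp
  have K0: "0 \<le> K" unfolding K_def using N1 \<open>t > 0\<close> by simp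
  have pS1: "prob_space S1" unfolding S1_def by (rule prob_space_uniform_sphere)
  have pS2: "prob_space S2" unfolding S2_def by (rule prob_space_uniform_sphere)
  interpret PP: product_prob_space "\<lambda>_::'n. S1" "UNIV::'n set"
    by (rule product_prob_spaceI) (rule pS1)
  have pPM: "prob_space PM" unfolding PM_def by (rule prob_space_PiM) (rule pS1)
  interpret PR: pair_prob_space PM S2
    using pPM pS2 by (simp add: pair_prob_space_def pair_sigma_finite_def prob_space_imp_sigma_finite)
  define E where "E i = {\<omega> \<in> space M. B < fst \<omega> i \<bullet> (\<Sigma> *v snd \<omega>)}" for i
  have Emeas: "E i \<in> sets M" for i
    unfolding E_def MM PM_def S2_def S1_def by measurable
  have Ebound: "emeasure M (E i) \<le> ennreal q" for i
  proof -
    have "emeasure M (E i) = (\<integral>\<^sup>+y. emeasure PM ((\<lambda>x. (x, y)) -` E i) \<partial>S2)"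
      unfolding MM by (rule PR.emeasure_pair_measure_alt2) (use Emeas MM in simp)
    also have "\<dots> = (\<integral>\<^sup>+y. emeasure S1 {a. B < a \<bullet> (\<Sigma> *v y)} \<partial>S2)"
    proof (rule nn_integral_cong)
      fix y
      have "(\<lambda>x. (x, y)) -` E i = {x \<in> space PM. x i \<in> {a. B < a \<bullet> (\<Sigma> *v y)}}"
        unfolding E_def MM by (auto simp: space_pair_measure S2_def)
      moreover have "{a. B < a \<bullet> (\<Sigma> *v y)} \<in> sets S1" unfolding S1_def by measurable
      ultimately show "emeasure PM ((\<lambda>x. (x, y)) -` E i) = emeasure S1 {a. B < a \<bullet> (\<Sigma> *v y)}"
        unfolding PM_def using PP.emeasure_PiM_Collect_single[of i "{a. B < a \<bullet> (\<Sigma> *v y)}"] by simp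
    qed
    also have "\<dots> \<le> (\<integral>\<^sup>+y. ennreal q \<partial>S2)"
    proof (rule nn_integral_mono_AE)
      show "AE y in S2. emeasure S1 {a. B < a \<bullet> (\<Sigma> *v y)} \<le> ennreal q"
        using AE_sphere_norm unfolding S2_def
      proof (rule AE_mp, intro AE_I2 impI)
        fix y :: "real^'d2" assume "norm y \<le> 1"
        then show "emeasure S1 {a. B < a \<bullet> (\<Sigma> *v y)} \<le> ennreal q"
          unfolding S1_def B_def q_def by (rule tail_one[OF _ K0])
      qed
    qed
    also have "\<dots> = ennreal q" using pS2 by (simp add: prob_space.emeasure_space_1)
    finally show ?thesis .
  qed
  have U: "emeasure M (\<Union>i. E i) \<le> ennreal (N * q)"
  proof -
    have "emeasure M (\<Union>i\<in>UNIV. E i) \<le> (\<Sum>i\<in>UNIV. emeasure M (E i))"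
      by (rule emeasure_subadditive_finite) (use Emeas in auto)
    also have "\<dots> \<le> (\<Sum>i\<in>(UNIV::'n set). ennreal q)" by (rule sum_mono) (rule Ebound)
    also have "\<dots> = ennreal (N * q)" unfolding N_def q_def
      by (simp add: ennreal_of_nat_eq_real_of_nat ennreal_mult)
    finally show ?thesis by simp
  qed
  interpret PMM: prob_space M unfolding MM by (rule PR.P.prob_space_axioms)
  have Umeas: "(\<Union>i. E i) \<in> sets M" using Emeas by auto
  have mU: "measure M (\<Union>i. E i) \<le> N * q"
    using U PMM.emeasure_eq_measure[of "\<Union>i. E i"] N1 unfolding q_def
    by (simp add: ennreal_le_iff)
  have seteq: "{\<omega> \<in> space M. \<forall>i. fst \<omega> i \<bullet> (\<Sigma> *v snd \<omega>)
            \<le> 2 * sqrt (t * ln (real CARD('n)) + t^2) * frob_norm \<Sigma> / sqrt (real CARD('d1))}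
       = space M - (\<Union>i. E i)"
    unfolding E_def B_def K_def N_def by (auto simp: not_less) (meson not_le)
  have meq: "measure M (space M - (\<Union>i. E i)) = 1 - measure M (\<Union>i. E i)"
    by (rule PMM.prob_compl[OF Umeas])
  have Nq: "t > ln 2 \<Longrightarrow> N * q \<le> 2 * exp (- t)"
  proof -
    assume tl: "t > ln 2"
    have t23: "2/3 < t" using tl ln2_ge_two_thirds by linarith
    have lnN: "0 \<le> ln N" using N1 by simp
    have "N * q = exp (ln N + (-(3/2) * K))" unfolding q_def exp_add using N1 by simp
    also have "\<dots> \<le> exp (- t)"
    proof (rule exp_mono)
      have a: "ln N * (1 - 3/2 * t) \<le> 0" using lnN t23 by (intro mult_nonneg_nonpos) auto
      have b: "t * (1 - 3/2 * t) \<le> 0" using t23 by (intro mult_nonneg_nonpos) auto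
      show "ln N + (-(3/2) * K) \<le> - t" using a b unfolding K_def
        by (simp add: algebra_simps power2_eq_square)
    qed
    also have "\<dots> \<le> 2 * exp (- t)" by simp
    finally show ?thesis .
  qed
  show ?thesis
  proof (cases "t \<le> ln 2")
    case True
    have "exp (- ln 2) \<le> exp (- t)" using True by simp
    then have "1 \<le> 2 * exp (-t)" by (simp add: exp_minus)
    then show ?thesis using measure_nonneg[of M "{\<omega> \<in> space M. \<forall>i. fst \<omega> i \<bullet> (\<Sigma> *v snd \<omega>)
            \<le> 2 * sqrt (t * ln (real CARD('n)) + t^2) * frob_norm \<Sigma> / sqrt (real CARD('d1))}"]
      by linarith
  next
    case False
    then show ?thesis using Nq[of] seteq meq mU by simp
  qed
qed

end
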